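(* There exists a $BH(19,6)$ matrix, i.e. a $19\times 19$ complex matrix $H$ all of whose entries are sixth roots of unity and which satisfies $HH^\ast=19I_{19}$.
   Context: $H^\ast$ denotes the conjugate transpose and $I_{19}$ the identity matrix of order $19$. *)

theory Defs
  imports "HOL-Analysis.Analysis"
begin

definition conj_transpose :: "complex ^'n ^'m \<Rightarrow> complex ^'m ^'n" where
  "conj_transpose A = (\<chi> i j. cnj (A $ j $ i))"

end

theory Submission
  imports Defs
begin

definition aa :: "nat list" where
  "aa = [5,5,3,5,3,5,5,1,3,1,1,3,4,3,1,1,3,1]"

definition EE :: "nat \<Rightarrow> nat \<Rightarrow> nat" where
  "EE i k = (if i = 0 \<or> k = 0 then 0 else aa ! ((k + 18 - i) mod 18))"

definition cA :: "nat \<Rightarrow> int" where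
  "cA k = [1,0,-1,-1,0,1] ! (k mod 6)"
definition cB :: "nat \<Rightarrow> int" where
  "cB k = [0,1,1,0,-1,-1] ! (k mod 6)"

definition ww :: complex where "ww = Complex (1/2) (sqrt 3 / 2)"

lemma ww2: "ww^2 = ww - 1"
  by (simp add: ww_def power2_eq_square complex_eq_iff field_simps)

lemma ww3: "ww^3 = -1"
proof -
  have "ww^3 = ww * ww^2" by (simp add: power_numeral_reduce)
  also have "\<dots> = ww*ww - ww" by (simp add: ww2 algebra_simps)
  also have "\<dots> = -1" using ww2 by (simp add: power2_eq_square)
  finally show ?thesis .
qed

lemma ww6: "ww^6 = 1"
proof -
  have "ww^6 = (ww^3)^2" by (simp flip: power_mult)
  thus ?thesis by (simp add: ww3)
qed

lemma ww_mod: "ww ^ k = ww ^ (k mod 6)"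
proof -
  have "ww^k = ww^(6*(k div 6)) * ww^(k mod 6)"
    by (simp flip: power_add)
  also have "ww^(6*(k div 6)) = 1" by (simp add: power_mult ww6)
  finally show ?thesis by simp
qed

lemma ww4: "ww^4 = -ww"
proof -
  have "ww^4 = ww * ww^3" by (simp add: power_numeral_reduce)
  thus ?thesis by (simp add: ww3)
qed

lemma ww5: "ww^5 = 1 - ww"
proof -
  have "ww^5 = ww^2 * ww^3" by (simp flip: power_add)
  thus ?thesis by (simp add: ww3 ww2)
qed

lemma ww_cf: "ww ^ k = of_int (cA k) + of_int (cB k) * ww"
proof -
  have "k mod 6 < 6" by simp
  then have "k mod 6 = 0 \<or> k mod 6 = 1 \<or> k mod 6 = 2 \<or> k mod 6 = 3 \<or> k mod 6 = 4 \<or> k mod 6 = 5"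
    by linarith
  then show ?thesis
    by (subst ww_mod, elim disjE) (simp_all add: cA_def cB_def ww3 ww2 ww4 ww5)
qed

lemma cnj_ww: "cnj ww = ww ^ 5"
  by (subst ww5) (simp add: ww_def complex_eq_iff)

definition chk :: bool where
  "chk = list_all (\<lambda>i. list_all (\<lambda>j.
      sum_list (map (\<lambda>k. cA (EE i k + 5 * EE j k)) [0..<19]) = (if i = j then 19 else 0) \<and>
      sum_list (map (\<lambda>k. cB (EE i k + 5 * EE j k)) [0..<19]) = 0) [0..<19]) [0..<19]"

lemma chk: chk
  by code_simp

lemma chk_fact:
  assumes "i < 19" "j < 19"
  shows "(\<Sum>k\<in>{0..<19}. cA (EE i k + 5 * EE j k)) = (if i = j then 19 else 0)"
    and "(\<Sum>k\<in>{0..<19}. cB (EE i k + 5 * EE j k)) = 0"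
  using chk assms unfolding chk_def list_all_iff
  by (auto simp: interv_sum_list_conv_sum_set_nat simp del: upt_Suc)

definition idx :: "19 \<Rightarrow> nat" where "idx i = nat (Rep_bit1 i)"

lemma idx_bij: "bij_betw idx UNIV {0..<19}"
proof (rule bij_betw_imageI)
  show "inj idx"
  proof (rule injI)
    fix x y assume "idx x = idx y"
    moreover have "Rep_bit1 x \<ge> 0" "Rep_bit1 y \<ge> 0" using Rep_bit1 by auto
    ultimately have "Rep_bit1 x = Rep_bit1 y" unfolding idx_def by simp
    thus "x = y" using Rep_bit1_inject by blast
  qed
  have R: "range (Rep_bit1 :: 19 \<Rightarrow> int) = {0..<19}"
    by (simp add: type_definition.Rep_range[OF type_definition_bit1])
  have "idx ` UNIV = nat ` range (Rep_bit1 :: 19 \<Rightarrow> int)"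
    unfolding idx_def by (simp add: image_image)
  also have "\<dots> = nat ` {0..<19::int}" using R by simp
  also have "\<dots> = {0..<19}"
  proof
    show "nat ` {0..<19::int} \<subseteq> {0..<19}" by auto
    show "{0..<19} \<subseteq> nat ` {0..<19::int}"
    proof
      fix n :: nat assume "n \<in> {0..<19}"
      thus "n \<in> nat ` {0..<19::int}" by (intro image_eqI[of _ _ "int n"]) auto
    qed
  qed
  finally show "idx ` UNIV = {0..<19}" .
qed

lemma idx_lt: "idx i < 19"
  using idx_bij by (auto simp: bij_betw_def)

lemma idx_eq: "idx i = idx j \<longleftrightarrow> i = j"
  using idx_bij by (auto simp: bij_betw_def inj_def)

theorem theorem3:
  shows "\<exists>H :: complex ^19 ^19.
           (\<forall>i j. (H $ i $ j) ^ 6 = 1) \<and>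
           H ** conj_transpose H = (19::real) *\<^sub>R mat 1"
proof (intro exI conjI allI)
  define H :: "complex ^19 ^19" where "H = (\<chi> i j. ww ^ EE (idx i) (idx j))"
  fix i j
  show "(H $ i $ j) ^ 6 = 1"
    unfolding H_def by (simp flip: power_mult add: mult.commute[of _ 6] power_mult ww6)
next
  define H :: "complex ^19 ^19" where "H = (\<chi> i j. ww ^ EE (idx i) (idx j))"
  show "H ** conj_transpose H = (19::real) *\<^sub>R mat 1"
  proof (rule vec_eq_iff[THEN iffD2], intro allI, rule vec_eq_iff[THEN iffD2], intro allI)
    fix i j :: 19
    have "(H ** conj_transpose H) $ i $ j = (\<Sum>k\<in>UNIV. ww ^ EE (idx i) (idx k) * cnj (ww ^ EE (idx j) (idx k)))"
      by (simp add: H_def matrix_matrix_mult_def conj_transpose_def)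
    also have "\<dots> = (\<Sum>k\<in>UNIV. ww ^ (EE (idx i) (idx k) + 5 * EE (idx j) (idx k)))"
      by (simp add: cnj_ww power_add power_mult)
    also have "\<dots> = (\<Sum>k\<in>{0..<19}. ww ^ (EE (idx i) k + 5 * EE (idx j) k))"
      using sum.reindex_bij_betw[OF idx_bij, of "\<lambda>k. ww ^ (EE (idx i) k + 5 * EE (idx j) k)"]
      by simp
    also have "\<dots> = (\<Sum>k\<in>{0..<19}. of_int (cA (EE (idx i) k + 5 * EE (idx j) k))
                       + of_int (cB (EE (idx i) k + 5 * EE (idx j) k)) * ww)"
      by (simp add: ww_cf)
    also have "\<dots> = of_int (\<Sum>k\<in>{0..<19}. cA (EE (idx i) k + 5 * EE (idx j) k))
                    + of_int (\<Sum>k\<in>{0..<19}. cB (EE (idx i) k + 5 * EE (idx j) k)) * ww"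
      by (simp add: sum.distrib sum_distrib_right)
    also have "\<dots> = (if i = j then 19 else 0)"
      using chk_fact[OF idx_lt idx_lt, of i j] idx_eq[of i j] by simp
    also have "\<dots> = ((19::real) *\<^sub>R mat 1 :: complex ^19 ^19) $ i $ j"
      by (simp add: mat_def scaleR_conv_of_real)
    finally show "(H ** conj_transpose H) $ i $ j = ((19::real) *\<^sub>R mat 1 :: complex ^19 ^19) $ i $ j" .
  qed
qed

end
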